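(* Let $r:\mathbb{R}^2\to\mathbb{R}$ be a positive reference image, $\phi:\mathbb{R}^2\to\mathbb{R}$ a signed image with Radon transform $\widetilde\phi$ and RSCDT $\widehat\phi$ with respect to $r$. Let $H_R\subseteq\mathcal{G}_R$ be a convex subgroup of $(\mathcal{G}_R,\star)$. Then $\widehat{\mathbb{S}}_{\phi,H_R}:=\{\widehat{\phi}_g:\phi_g\in\mathbb{S}_{\phi,H_R}\}$ is convex, where $\mathbb{S}_{\phi,H_R}:=\{\phi_g=\mathcal{R}^{-1}((g^\theta)'\,\widetilde\phi\circ g^\theta):\ g\in H_R\}$.
   Context: Radon transform: $\widetilde s(t,\theta)=\mathcal{R}(s)(t,\theta)=\int_{\mathbb{R}^2}s(\mathbf{x})\delta(t-\mathbf{x}\cdot\xi_\theta)\,d\mathbf{x}$, $\xi_\theta=(\cos\theta,\sin\theta)^T$; $\mathcal{R}^{-1}$ its inverse. $\mathcal{G}_R$ is the set of families $g=(g^\theta)_{\theta\in[0,\pi]}$ of strictly increasing (differentiable) bijections $g^\theta:\mathbb{R}\to\mathbb{R}$, with group operation $(g\star h)(\cdot,\theta)=(g^\theta\circ h^\theta)(\cdot)$. A convex subgroup is a subset $H_R$ that is a convex set (under pointwise linear combinations) and a group under $\star$. $(\widetilde\phi\circ g^\theta)(t)=\widetilde\phi(g^\theta(t),\theta)$. For nonnegative integrable $p$, $F_p(x)=\int_{-\infty}^x p$, $F^\dagger(y)=\inf\{x:F(x)>y\}$. SCDT of signed $f$ w.r.t. positive $\rho$: $f^\pm$ positive/negative parts,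 $(f^\pm)^\star=F^\dagger_{f^\pm/\|f^\pm\|_1}\circ F_{\rho/\|\rho\|_1}$ (or $0$ if $f^\pm=0$), $\mathrm{SCDT}_\rho(f)=((f^+)^\star,\|f^+\|_1,(f^-)^\star,\|f^-\|_1)$. RSCDT of $s$ w.r.t. $r$: $\widehat s(\cdot,\theta)=\mathrm{SCDT}_{\widetilde r(\cdot,\theta)}(\widetilde s(\cdot,\theta))$ for each $\theta$; convex combinations of RSCDTs are taken componentwise. *)

theory Defs
  imports "HOL-Analysis.Analysis"
begin

type_synonym image = "real \<times> real \<Rightarrow> real"
type_synonym family = "real \<Rightarrow> real \<Rightarrow> real"   (* g \<theta> t = g^\<theta>(t) *)
type_synonym scdt_val = "(real \<Rightarrow> real) \<times> real \<times> (real \<Rightarrow> real) \<times> real"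

text \<open>Radon transform: integral of s over the line {x. x \<bullet> \<xi>_\<theta> = t},
  parametrised as t \<xi>_\<theta> + u \<xi>_\<theta>^\<bottom>.\<close>
definition radon :: "image \<Rightarrow> real \<Rightarrow> real \<Rightarrow> real" where
  "radon s t \<theta> = (LINT u|lborel. s (t * cos \<theta> - u * sin \<theta>, t * sin \<theta> + u * cos \<theta>))"

definition radon_inv :: "(real \<Rightarrow> real \<Rightarrow> real) \<Rightarrow> image" where
  "radon_inv h = (SOME s. integrable lborel s \<and> (\<forall>\<theta>\<in>{0..pi}. \<forall>t. radon s t \<theta> = h t \<theta>))"

definition pos_part :: "(real \<Rightarrow> real) \<Rightarrow> real \<Rightarrow> real" where
  "pos_part f = (\<lambda>x. max (f x) 0)"

definition neg_part :: "(real \<Rightarrow> real) \<Rightarrow> real \<Rightarrow> real" where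
  "neg_part f = (\<lambda>x. max (- f x) 0)"

definition L1norm :: "(real \<Rightarrow> real) \<Rightarrow> real" where
  "L1norm f = (LINT x|lborel. \<bar>f x\<bar>)"

definition cdf :: "(real \<Rightarrow> real) \<Rightarrow> real \<Rightarrow> real" where
  "cdf p x = (LINT y:{..x}|lborel. p y)"

definition gen_inv :: "(real \<Rightarrow> real) \<Rightarrow> real \<Rightarrow> real" where
  "gen_inv F y = Inf {x. F x > y}"

definition cdt_star :: "(real \<Rightarrow> real) \<Rightarrow> (real \<Rightarrow> real) \<Rightarrow> real \<Rightarrow> real" where
  "cdt_star \<rho> h = (if L1norm h = 0 then (\<lambda>_. 0)
      else gen_inv (cdf (\<lambda>x. h x / L1norm h)) \<circ> cdf (\<lambda>x. \<rho> x / L1norm \<rho>))"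

definition SCDT :: "(real \<Rightarrow> real) \<Rightarrow> (real \<Rightarrow> real) \<Rightarrow> scdt_val" where
  "SCDT \<rho> f = (cdt_star \<rho> (pos_part f), L1norm (pos_part f),
                cdt_star \<rho> (neg_part f), L1norm (neg_part f))"

definition RSCDT :: "image \<Rightarrow> image \<Rightarrow> real \<Rightarrow> scdt_val" where
  "RSCDT r s = (\<lambda>\<theta>. if \<theta> \<in> {0..pi} then SCDT (\<lambda>t. radon r t \<theta>) (\<lambda>t. radon s t \<theta>)
                    else ((\<lambda>_. 0), 0, (\<lambda>_. 0), 0))"

definition scdt_comb :: "real \<Rightarrow> scdt_val \<Rightarrow> scdt_val \<Rightarrow> scdt_val" where
  "scdt_comb l A B = (case A of (a1, a2, a3, a4) \<Rightarrow> case B of (b1, b2, b3, b4) \<Rightarrow>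
     ((\<lambda>x. l * a1 x + (1 - l) * b1 x), l * a2 + (1 - l) * b2,
      (\<lambda>x. l * a3 x + (1 - l) * b3 x), l * a4 + (1 - l) * b4))"

definition rscdt_comb :: "real \<Rightarrow> (real \<Rightarrow> scdt_val) \<Rightarrow> (real \<Rightarrow> scdt_val) \<Rightarrow> real \<Rightarrow> scdt_val" where
  "rscdt_comb l A B = (\<lambda>\<theta>. scdt_comb l (A \<theta>) (B \<theta>))"

definition rscdt_convex :: "(real \<Rightarrow> scdt_val) set \<Rightarrow> bool" where
  "rscdt_convex S \<longleftrightarrow> (\<forall>A\<in>S. \<forall>B\<in>S. \<forall>l\<in>{0..1}. rscdt_comb l A B \<in> S)"

definition GR :: "family set" where
  "GR = {g. (\<forall>\<theta>\<in>{0..pi}. strict_mono (g \<theta>) \<and> bij (g \<theta>) \<and> (\<forall>t. g \<theta> differentiable (at t)))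
           \<and> (\<forall>\<theta>. \<theta> \<notin> {0..pi} \<longrightarrow> g \<theta> = id)}"

definition fam_comp :: "family \<Rightarrow> family \<Rightarrow> family" (infixl "\<star>" 70) where
  "g \<star> h = (\<lambda>\<theta>. g \<theta> \<circ> h \<theta>)"

definition fam_id :: family where
  "fam_id = (\<lambda>\<theta>. id)"

definition fam_inv :: "family \<Rightarrow> family" where
  "fam_inv g = (\<lambda>\<theta>. inv (g \<theta>))"

definition convex_subgroup :: "family set \<Rightarrow> bool" where
  "convex_subgroup H \<longleftrightarrow> H \<subseteq> GR
     \<and> (\<forall>g\<in>H. \<forall>h\<in>H. \<forall>l\<in>{0..1::real}. (\<lambda>\<theta> t. l * g \<theta> t + (1 - l) * h \<theta> t) \<in> H)
     \<and> fam_id \<in> H \<and> (\<forall>g\<in>H. \<forall>h\<in>H. g \<star> h \<in> H) \<and> (\<forall>g\<in>H. fam_inv g \<in> H)"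

definition radon_act :: "family \<Rightarrow> image \<Rightarrow> real \<Rightarrow> real \<Rightarrow> real" where
  "radon_act g \<phi> t \<theta> = deriv (g \<theta>) t * radon \<phi> (g \<theta> t) \<theta>"

definition phi_g :: "image \<Rightarrow> family \<Rightarrow> image" where
  "phi_g \<phi> g = radon_inv (radon_act g \<phi>)"

definition model_set :: "image \<Rightarrow> family set \<Rightarrow> image set" where
  "model_set \<phi> H = {phi_g \<phi> g | g. g \<in> H}"

end

theory Submission imports Defs begin

lemma radon_meas:
  assumes "\<phi> \<in> borel_measurable lborel"
  shows "(\<lambda>t. radon \<phi> t \<theta>) \<in> borel_measurable borel"
proof -
  have phi: "\<phi> \<in> borel_measurable (borel \<Otimes>\<^sub>M borel)"
    using assms by (simp add: borel_prod measurable_lborel1)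
  have "(\<lambda>(t,u). \<phi> (t * cos \<theta> - u * sin \<theta>, t * sin \<theta> + u * cos \<theta>)) \<in> borel_measurable (borel \<Otimes>\<^sub>M lborel)"
    using phi by measurable
  then have "(\<lambda>t. LINT u|lborel. \<phi> (t * cos \<theta> - u * sin \<theta>, t * sin \<theta> + u * cos \<theta>)) \<in> borel_measurable borel"
    by (intro lborel.borel_measurable_lebesgue_integral) simp
  then show ?thesis unfolding radon_def .
qed

lemma deriv_meas:
  fixes G :: "real \<Rightarrow> real"
  assumes "\<And>t. G differentiable (at t)"
  shows "deriv G \<in> borel_measurable borel"
proof (rule borel_measurable_LIMSEQ_real)
  fix x :: real
  have D: "DERIV G x :> deriv G x" using assms DERIV_deriv_iff_real_differentiable by blast
  have h: "filterlim (\<lambda>n::nat. 1 / real (Suc n)) (at 0) sequentially"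
    unfolding filterlim_at
    by (auto intro!: LIMSEQ_Suc[OF lim_const_over_n] simp del: of_nat_Suc)
  show "(\<lambda>n. (G (x + 1 / real (Suc n)) - G x) / (1 / real (Suc n))) \<longlonglongrightarrow> deriv G x"
    using filterlim_compose[OF D[unfolded DERIV_def] h] by simp
next
  fix n :: nat
  have "continuous_on UNIV G"
    using assms by (simp add: continuous_at_imp_continuous_on differentiable_imp_continuous_within)
  then have "G \<in> borel_measurable borel" using borel_measurable_continuous_onI by blast
  then show "(\<lambda>x. (G (x + 1 / real (Suc n)) - G x) / (1 / real (Suc n))) \<in> borel_measurable borel"
    by measurable
qed

lemma deriv_nonneg:
  fixes G :: "real \<Rightarrow> real"
  assumes "strict_mono G" "G differentiable (at t)"
  shows "deriv G t \<ge> 0"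
proof (rule ccontr)
  assume "\<not> ?thesis"
  then have "deriv G t < 0" by simp
  moreover have "DERIV G t :> deriv G t" using assms DERIV_deriv_iff_real_differentiable by blast
  ultimately obtain d where "d > 0" "\<forall>h>0. h < d \<longrightarrow> G t > G (t + h)"
    using DERIV_neg_dec_right by blast
  then have "G t > G (t + d/2)" by auto
  moreover have "G t < G (t + d/2)" using assms(1) \<open>d>0\<close> by (simp add: strict_mono_less)
  ultimately show False by simp
qed

lemma set_int_borel_leb:
  fixes f :: "real \<Rightarrow> real"
  assumes "f \<in> borel_measurable borel" "T \<in> sets borel"
  shows "set_integrable lborel T f \<longleftrightarrow> set_integrable lebesgue T f"
    and "set_lebesgue_integral lborel T f = set_lebesgue_integral lebesgue T f"
proof -
  have m: "(\<lambda>x. indicator T x *\<^sub>R f x) \<in> lborel \<rightarrow>\<^sub>M borel" using assms by measurable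
  show "set_integrable lborel T f \<longleftrightarrow> set_integrable lebesgue T f"
    unfolding set_integrable_def using integrable_completion[OF m] by simp
  show "set_lebesgue_integral lborel T f = set_lebesgue_integral lebesgue T f"
    unfolding set_lebesgue_integral_def using integral_completion[OF m] by simp
qed

lemma cov:
  fixes G q :: "real \<Rightarrow> real"
  assumes mono: "strict_mono G" and dif: "\<And>t. G differentiable (at t)"
    and q: "q \<in> borel_measurable borel" and T: "T \<in> sets borel" and GT: "G ` T \<in> sets borel"
    and dm: "deriv G \<in> borel_measurable borel"
  shows "set_integrable lborel T (\<lambda>t. deriv G t * q (G t)) \<longleftrightarrow> set_integrable lborel (G ` T) q"
    and "set_lebesgue_integral lborel T (\<lambda>t. deriv G t * q (G t)) = set_lebesgue_integral lborel (G ` T) q"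
proof -
  have cG: "continuous_on UNIV G"
    using dif by (simp add: continuous_at_imp_continuous_on differentiable_imp_continuous_within)
  then have Gm: "G \<in> borel_measurable borel" using borel_measurable_continuous_onI by blast
  have pm: "(\<lambda>t. deriv G t * q (G t)) \<in> borel_measurable borel" using Gm q dm by measurable
  have abs: "\<bar>deriv G t\<bar> = deriv G t" for t using deriv_nonneg[OF mono dif] by simp
  have der: "(G has_field_derivative deriv G x) (at x within T)" for x
    using dif DERIV_deriv_iff_real_differentiable has_field_derivative_at_within by blast
  have inj: "inj_on G T" using mono strict_mono_on_imp_inj_on by (metis inj_on_subset subset_UNIV strict_mono_imp_inj_on)
  have Tl: "T \<in> sets lebesgue" using T by simp
  note CV = has_absolute_integral_change_of_variables_1'[OF Tl der inj, of q, unfolded abs]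
  note E1 = set_int_borel_leb[OF pm T]
  note E2 = set_int_borel_leb[OF q GT]
  show i: "set_integrable lborel T (\<lambda>t. deriv G t * q (G t)) \<longleftrightarrow> set_integrable lborel (G ` T) q"
    unfolding E1 E2 using CV by blast
  show "set_lebesgue_integral lborel T (\<lambda>t. deriv G t * q (G t)) = set_lebesgue_integral lborel (G ` T) q"
  proof (cases "set_integrable lborel (G ` T) q")
    case True
    then have "set_integrable lebesgue (G ` T) q" using E2 by simp
    then have "(\<lambda>t. deriv G t * q (G t)) absolutely_integrable_on T \<and> integral T (\<lambda>t. deriv G t * q (G t)) = integral (G ` T) q"
      using CV by blast
    then show ?thesis using E1 E2 True
      by (simp add: set_lebesgue_integral_eq_integral)
  next
    case False
    then have "\<not> set_integrable lborel T (\<lambda>t. deriv G t * q (G t))" using i by simp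
    then show ?thesis using False
      by (simp add: set_lebesgue_integral_def set_integrable_def not_integrable_integral_eq)
  qed
qed

definition trans_inf :: "(real \<Rightarrow> real) \<Rightarrow> real set \<Rightarrow> real" where
  "trans_inf K S = (if S = UNIV \<or> S = {} then Inf S else K (Inf S))"

lemma inv_mono_aux:
  fixes G :: "real \<Rightarrow> real"
  assumes "strict_mono G" "surj G" "u \<le> v"
  shows "inv G u \<le> inv G v"
proof (rule ccontr)
  assume "\<not> ?thesis"
  then have "G (inv G v) < G (inv G u)" using assms(1) by (simp add: strict_mono_less)
  then show False using assms by (simp add: surj_f_inv_f)
qed

lemma gen_inv_comp:
  fixes G F :: "real \<Rightarrow> real"
  assumes G: "strict_mono G" "surj G" and F: "mono F"
  shows "gen_inv (\<lambda>x. F (G x)) y = trans_inf (inv G) {z. y < F z}"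
proof -
  define S where "S = {z. y < F z}"
  define P where "P = {x. y < F (G x)}"
  have P: "P = {x. G x \<in> S}" unfolding P_def S_def by simp
  have GI: "G (inv G z) = z" for z using G by (simp add: surj_f_inv_f)
  have IG: "inv G (G x) = x" for x using G by (simp add: strict_mono_imp_inj_on)
  show ?thesis
  proof (cases "S = UNIV \<or> S = {}")
    case True
    then have "P = S" unfolding P by auto
    then show ?thesis using True unfolding gen_inv_def trans_inf_def S_def P_def by simp
  next
    case False
    then obtain z0 z1 where z0: "z0 \<notin> S" and z1: "z1 \<in> S" by auto
    have up: "z \<in> S \<Longrightarrow> z \<le> w \<Longrightarrow> w \<in> S" for z w
      unfolding S_def using F by (auto dest: monoD[of F z w])
    have lb: "z \<in> S \<Longrightarrow> z0 \<le> z" for z using up z0 by (meson linear)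
    have bdd: "bdd_below S" using lb by (meson bdd_below.unfold)
    have ne: "S \<noteq> {}" using z1 by auto
    define a where "a = Inf S"
    have "Inf P = inv G a"
    proof (rule cInf_eq_non_empty)
      show "P \<noteq> {}" using z1 GI unfolding P by (metis empty_iff mem_Collect_eq)
    next
      fix x assume "x \<in> P"
      then have "a \<le> G x" unfolding P a_def using bdd by (simp add: cInf_lower)
      then show "inv G a \<le> x" using inv_mono_aux[OF G] IG by metis
    next
      fix b assume B: "\<And>x. x \<in> P \<Longrightarrow> b \<le> x"
      show "b \<le> inv G a"
      proof (rule ccontr)
        assume "\<not> b \<le> inv G a"
        then have "G (inv G a) < G b" using G(1) by (simp add: strict_mono_less)
        then have "Inf S < G b" using GI a_def by simp
        then obtain z where "z \<in> S" "z < G b" using cInf_less_iff[OF ne bdd] by blast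
        then have "inv G z \<in> P" using GI unfolding P by simp
        then have "b \<le> inv G z" using B by blast
        then have "G b \<le> z" using G(1) GI by (metis strict_mono_less_eq)
        then show False using \<open>z < G b\<close> by simp
      qed
    qed
    moreover have "trans_inf (inv G) S = inv G a" using False unfolding trans_inf_def a_def by simp
    ultimately show ?thesis unfolding gen_inv_def S_def P_def by simp
  qed
qed

lemma cdf_mono:
  fixes q :: "real \<Rightarrow> real"
  assumes "integrable lborel q" "\<And>x. q x \<ge> 0"
  shows "mono (cdf q)"
proof (rule monoI)
  fix x y :: real assume "x \<le> y"
  show "cdf q x \<le> cdf q y"
    unfolding cdf_def set_lebesgue_integral_def
    using assms \<open>x \<le> y\<close>
    by (intro integral_mono integrable_mult_indicator) (auto split: split_indicator)
qed


definition Kfun :: "(real \<Rightarrow> real) \<Rightarrow> (real \<Rightarrow> real) \<Rightarrow> (real \<Rightarrow> real) \<Rightarrow> real \<Rightarrow> real" where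
  "Kfun \<rho> K p t = (if L1norm p = 0 then 0 else
     trans_inf K {z. cdf (\<lambda>x. \<rho> x / L1norm \<rho>) t < cdf (\<lambda>x. p x / L1norm p) z})"

lemma image_atMost_G:
  fixes G :: "real \<Rightarrow> real"
  assumes "strict_mono G" "surj G"
  shows "G ` {..t} = {..G t}"
proof
  show "G ` {..t} \<subseteq> {..G t}" using assms(1) by (auto simp: strict_mono_less_eq)
  show "{..G t} \<subseteq> G ` {..t}"
  proof
    fix y assume "y \<in> {..G t}"
    obtain x where "y = G x" using assms(2) by (metis surjD)
    then show "y \<in> G ` {..t}" using \<open>y \<in> {..G t}\<close> assms(1) by (auto simp: strict_mono_less_eq)
  qed
qed

lemma transform_p:
  fixes G p \<rho> :: "real \<Rightarrow> real"
  assumes G: "strict_mono G" "surj G" and dif: "\<And>t. G differentiable (at t)"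
    and p: "p \<in> borel_measurable borel" and pn: "\<And>x. p x \<ge> 0"
  shows "L1norm (\<lambda>t. deriv G t * p (G t)) = L1norm p"
    and "cdt_star \<rho> (\<lambda>t. deriv G t * p (G t)) = Kfun \<rho> (inv G) p"
proof -
  have dm: "deriv G \<in> borel_measurable borel" using deriv_meas dif by blast
  have dn: "deriv G t \<ge> 0" for t using deriv_nonneg G(1) dif by blast
  have pGn: "deriv G t * p (G t) \<ge> 0" for t using dn pn by simp
  have a1: "(\<lambda>x. \<bar>p x\<bar>) = p" using pn by (simp add: abs_of_nonneg)
  have a2: "(\<lambda>t. \<bar>deriv G t * p (G t)\<bar>) = (\<lambda>t. deriv G t * p (G t))" using pGn by (simp add: abs_of_nonneg)
  have GU: "G ` UNIV = UNIV" using G(2) by simp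
  note C = cov[OF G(1) dif p, of UNIV, unfolded GU, OF _ _ dm]
  show L: "L1norm (\<lambda>t. deriv G t * p (G t)) = L1norm p"
    unfolding L1norm_def a1 a2 using C(2) by (simp add: set_lebesgue_integral_def)
  show "cdt_star \<rho> (\<lambda>t. deriv G t * p (G t)) = Kfun \<rho> (inv G) p"
  proof (cases "L1norm p = 0")
    case True
    then show ?thesis unfolding cdt_star_def L Kfun_def by simp
  next
    case False
    define N where "N = L1norm p"
    have "integrable lborel p" using False unfolding L1norm_def a1 using not_integrable_integral_eq by blast
    then have qi: "integrable lborel (\<lambda>x. p x / N)" by simp
    have qn: "\<And>x. p x / N \<ge> 0"
      using pn N_def unfolding L1norm_def a1 by (simp add: integral_nonneg)
    have qm: "(\<lambda>x. p x / N) \<in> borel_measurable borel" using p by measurable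
    have cdfeq: "cdf (\<lambda>x. deriv G x * p (G x) / N) t = cdf (\<lambda>x. p x / N) (G t)" for t
    proof -
      have e: "(\<lambda>x. deriv G x * p (G x) / N) = (\<lambda>x. deriv G x * (p (G x) / N))" by auto
      show ?thesis
        unfolding cdf_def e
        using cov(2)[OF G(1) dif qm, of "{..t}", OF _ _ dm] image_atMost_G[OF G] by simp
    qed
    have cfun: "cdf (\<lambda>x. deriv G x * p (G x) / N) = (\<lambda>t. cdf (\<lambda>x. p x / N) (G t))"
      using cdfeq by auto
    have "cdt_star \<rho> (\<lambda>t. deriv G t * p (G t)) = gen_inv (\<lambda>t. cdf (\<lambda>x. p x / N) (G t)) \<circ> cdf (\<lambda>x. \<rho> x / L1norm \<rho>)"
      unfolding cdt_star_def L N_def[symmetric] using False N_def cfun by simp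
    also have "\<dots> = Kfun \<rho> (inv G) p"
      unfolding Kfun_def N_def[symmetric] using False N_def
        gen_inv_comp[OF G cdf_mono[OF qi qn]]
      by (simp add: fun_eq_iff)
    finally show ?thesis .
  qed
qed


lemma max_mult_aux:
  fixes d a :: real
  assumes "0 \<le> d"
  shows "max (d * a) 0 = d * max a 0" and "max (- (d * a)) 0 = d * max (- a) 0"
proof -
  show "max (d * a) 0 = d * max a 0"
  proof (cases "a \<le> 0")
    case True then show ?thesis using assms by (simp add: mult_nonneg_nonpos max_def)
  next
    case False then show ?thesis using assms by (auto simp add: max_def mult_le_0_iff)
  qed
  show "max (- (d * a)) 0 = d * max (- a) 0"
  proof (cases "a \<le> 0")
    case True then show ?thesis using assms by (auto simp add: max_def zero_le_mult_iff)
  next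
    case False then show ?thesis using assms by (simp add: max_def mult_nonneg_nonneg)
  qed
qed

lemma SCDT_transform:
  fixes G f \<rho> :: "real \<Rightarrow> real"
  assumes G: "strict_mono G" "surj G" and dif: "\<And>t. G differentiable (at t)"
    and f: "f \<in> borel_measurable borel"
  shows "SCDT \<rho> (\<lambda>t. deriv G t * f (G t)) =
    (Kfun \<rho> (inv G) (pos_part f), L1norm (pos_part f), Kfun \<rho> (inv G) (neg_part f), L1norm (neg_part f))"
proof -
  have dn: "deriv G t \<ge> 0" for t using deriv_nonneg G(1) dif by blast
  have e1: "pos_part (\<lambda>t. deriv G t * f (G t)) = (\<lambda>t. deriv G t * pos_part f (G t))"
    unfolding pos_part_def using dn max_mult_aux(1) by simp
  have e2: "neg_part (\<lambda>t. deriv G t * f (G t)) = (\<lambda>t. deriv G t * neg_part f (G t))"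
    unfolding neg_part_def using dn max_mult_aux(2) by simp
  have pm: "pos_part f \<in> borel_measurable borel" unfolding pos_part_def using f by measurable
  have nm: "neg_part f \<in> borel_measurable borel" unfolding neg_part_def using f by measurable
  have pn: "pos_part f x \<ge> 0" for x unfolding pos_part_def by simp
  have nn: "neg_part f x \<ge> 0" for x unfolding neg_part_def by simp
  show ?thesis unfolding SCDT_def e1 e2
    using transform_p[OF G dif pm pn] transform_p[OF G dif nm nn] by simp
qed

lemma trans_inf_comb:
  "trans_inf (\<lambda>t. l * K1 t + (1 - l) * K2 t) S = l * trans_inf K1 S + (1 - l) * trans_inf K2 S"
  unfolding trans_inf_def by (simp add: algebra_simps)

lemma Kfun_comb:
  "Kfun \<rho> (\<lambda>t. l * K1 t + (1 - l) * K2 t) p = (\<lambda>x. l * Kfun \<rho> K1 p x + (1 - l) * Kfun \<rho> K2 p x)"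
  unfolding Kfun_def by (simp add: trans_inf_comb fun_eq_iff)

theorem mainTheorem4:
  fixes r \<phi> :: image and H :: "family set"
  assumes r_pos: "\<And>x. r x > 0"
    and r_int: "integrable lborel r"
    and phi_int: "integrable lborel \<phi>"
    and H: "convex_subgroup H"
    and inv_defined: "\<And>g. g \<in> H \<Longrightarrow> \<exists>s. integrable lborel s \<and>
                         (\<forall>\<theta>\<in>{0..pi}. \<forall>t. radon s t \<theta> = radon_act g \<phi> t \<theta>)"
  shows "rscdt_convex {RSCDT r s | s. s \<in> model_set \<phi> H}"
proof -
  define \<rho> where "\<rho> \<theta> = (\<lambda>t. radon r t \<theta>)" for \<theta>
  define f where "f \<theta> = (\<lambda>t. radon \<phi> t \<theta>)" for \<theta>
  have fm: "f \<theta> \<in> borel_measurable borel" for \<theta>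
    unfolding f_def using radon_meas phi_int by blast
  have HG: "H \<subseteq> GR" using H unfolding convex_subgroup_def by blast
  have gprops: "strict_mono (g \<theta>) \<and> bij (g \<theta>) \<and> (\<forall>t. g \<theta> differentiable (at t))"
    if "g \<in> H" "\<theta> \<in> {0..pi}" for g \<theta>
    using HG that unfolding GR_def by blast
  define R where "R g = (\<lambda>\<theta>. if \<theta> \<in> {0..pi} then
     (Kfun (\<rho> \<theta>) (inv (g \<theta>)) (pos_part (f \<theta>)), L1norm (pos_part (f \<theta>)),
      Kfun (\<rho> \<theta>) (inv (g \<theta>)) (neg_part (f \<theta>)), L1norm (neg_part (f \<theta>)))
     else ((\<lambda>_. 0), 0, (\<lambda>_. 0), 0))" for g :: family
  have RS: "RSCDT r (phi_g \<phi> g) = R g" if g: "g \<in> H" for g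
  proof -
    let ?P = "\<lambda>s. integrable lborel s \<and> (\<forall>\<theta>\<in>{0..pi}. \<forall>t. radon s t \<theta> = radon_act g \<phi> t \<theta>)"
    have "?P (phi_g \<phi> g)" unfolding phi_g_def radon_inv_def using someI_ex[OF inv_defined[OF g]] .
    then have rad: "(\<lambda>t. radon (phi_g \<phi> g) t \<theta>) = (\<lambda>t. deriv (g \<theta>) t * f \<theta> (g \<theta> t))"
      if "\<theta> \<in> {0..pi}" for \<theta> using that unfolding radon_act_def f_def by auto
    show ?thesis
    proof
      fix \<theta>
      show "RSCDT r (phi_g \<phi> g) \<theta> = R g \<theta>"
      proof (cases "\<theta> \<in> {0..pi}")
        case True
        have gp: "strict_mono (g \<theta>)" "surj (g \<theta>)" "\<And>t. g \<theta> differentiable (at t)"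
          using gprops[OF g True] bij_is_surj by blast+
        have "RSCDT r (phi_g \<phi> g) \<theta> = SCDT (\<rho> \<theta>) (\<lambda>t. radon (phi_g \<phi> g) t \<theta>)"
          unfolding RSCDT_def \<rho>_def using True by simp
        also have "\<dots> = SCDT (\<rho> \<theta>) (\<lambda>t. deriv (g \<theta>) t * f \<theta> (g \<theta> t))"
          using rad[OF True] by simp
        also have "\<dots> = R g \<theta>"
          unfolding R_def using True SCDT_transform[OF gp fm[of \<theta>], of "\<rho> \<theta>"] by simp
        finally show ?thesis .
      next
        case False
        then show ?thesis unfolding RSCDT_def R_def by auto
      qed
    qed
  qed
  have S: "{RSCDT r s | s. s \<in> model_set \<phi> H} = R ` H"
    unfolding model_set_def using RS by (auto intro!: exI)
  show ?thesis unfolding rscdt_convex_def S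
  proof (intro ballI)
    fix A B l assume A: "A \<in> R ` H" and B: "B \<in> R ` H" and l: "l \<in> {0..1::real}"
    obtain g1 g2 where g1: "g1 \<in> H" "A = R g1" and g2: "g2 \<in> H" "B = R g2" using A B by auto
    define k where "k = (\<lambda>\<theta> t. l * fam_inv g1 \<theta> t + (1 - l) * fam_inv g2 \<theta> t)"
    have kH: "k \<in> H" using H g1 g2 l unfolding convex_subgroup_def k_def by blast
    define h where "h = fam_inv k"
    have hH: "h \<in> H" using H kH unfolding convex_subgroup_def h_def by blast
    have ih: "inv (h \<theta>) = (\<lambda>t. l * inv (g1 \<theta>) t + (1 - l) * inv (g2 \<theta>) t)" if "\<theta> \<in> {0..pi}" for \<theta>
    proof -
      have "bij (k \<theta>)" using gprops[OF kH that] by blast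
      then have "inv (h \<theta>) = k \<theta>" unfolding h_def fam_inv_def by (simp add: inv_inv_eq)
      then show ?thesis unfolding k_def fam_inv_def by simp
    qed
    have "rscdt_comb l A B = R h"
    proof
      fix \<theta>
      show "rscdt_comb l A B \<theta> = R h \<theta>"
      proof (cases "\<theta> \<in> {0..pi}")
        case True
        have Rin: "R g \<theta> = (Kfun (\<rho> \<theta>) (inv (g \<theta>)) (pos_part (f \<theta>)), L1norm (pos_part (f \<theta>)),
          Kfun (\<rho> \<theta>) (inv (g \<theta>)) (neg_part (f \<theta>)), L1norm (neg_part (f \<theta>)))" for g
          unfolding R_def using True by simp
        show ?thesis unfolding rscdt_comb_def g1(2) g2(2) Rin scdt_comb_def ih[OF True] Kfun_comb
          by (simp add: algebra_simps)
      next
        case False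
        have Rout: "R g \<theta> = ((\<lambda>_. 0), 0, (\<lambda>_. 0), 0)" for g
          unfolding R_def using False by auto
        show ?thesis unfolding rscdt_comb_def g1(2) g2(2) Rout scdt_comb_def by simp
      qed
    qed
    then show "rscdt_comb l A B \<in> R ` H" using hH by blast
  qed
qed

end
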